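(* Let $\{x^k\}$ be generated by the Deterministic Asynchronous PALM algorithm and assume (A3). Then for every $k\in\mathbb N$, $$\Phi(z^{k+1})+\frac12\Big(\frac1{\gamma^k_{j_k}}-L_{j_k}(x^k_{-j_k})-2M\sqrt{\rho_\tau\tau}\Big)\|x^{k+1}_{j_k}-x^k_{j_k}\|^2\le\Phi(z^k).$$ In particular $\Psi(x^k)\le\Phi(z^k)$ and $\Phi(z^0)=\Psi(x^0)$.
   Context: Let $\mathcal H=\mathcal H_1\times\cdots\times\mathcal H_m$ be a product of finite-dimensional real Euclidean spaces with $\langle x,y\rangle=\sum_j\langle x_j,y_j\rangle$. For $x\in\mathcal H$, $x_{-j}$ denotes $x$ with its $j$th block removed and $(x_{-j};y)$ the point with $j$th block replaced by $y\in\mathcal H_j$. Let $f:\mathcal H\to\mathbb R$ be $C^1$, $r_j:\mathcal H_j\to(-\infty,\infty]$ proper lower semicontinuous, $r(x)=\sum_jr_j(x_j)$, $\Psi=f+r$ bounded below. $r$ is prox-bounded: there is $\lambda_r>0$ with $\operatorname{argmin}_y\{r(y)+\frac1{2\lambda}\|x-y\|^2\}\ne\emptyset$ for all $x$ and $0<\lambda\le\lambda_r$. For each $j$ there is $L_j:\mathcal H_{-j}\to(0,\infty)$ such that $y\mapsto\nabla_jf(x_{-j};y)$ is $L_j(x_{-j})$-Lipschitz for every $x$. Delays: an integer $\tau\ge1$ and $d_k\in\{0,\dots,\tau\}^m$; $x^{k-d_k}:=(x_1^{k-d_{k,1}},\dots,x_m^{k-d_{k,m}})$, with $x^i_j=x^0_j$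 for $i\le0$. Deterministic Asynchronous PALM: choose $x^0$, $c\in(0,1)$, $M>0$, indices $j_k\in\{1,\dots,m\}$; let $\rho_\tau:=\sup_{j,k}|\{h:k-\tau\le h\le k,\ j_h=j\}|$. For each $k$ set $\gamma^k_j=\min\{c(L_j(x^{k-d_k}_{-j})+2M\sqrt{\rho_\tau\tau})^{-1},\lambda_r\}$, choose $x^{k+1}_{j_k}\in\operatorname{argmin}_{u\in\mathcal H_{j_k}}\{r_{j_k}(u)+\langle\nabla_{j_k}f(x^{k-d_k}),u-x^k_{j_k}\rangle+\frac1{2\gamma^k_{j_k}}\|u-x^k_{j_k}\|^2\}$, and $x^{k+1}_j=x^k_j$ for $j\ne j_k$. (A3): $\|\nabla_{j_k}f(x^k)-\nabla_{j_k}f(x^{k-d_k})\|\le M\|x^k-x^{k-d_k}\|$ for all $k$. Lyapunov function $\Phi:\mathcal H^{1+\tau}\to(-\infty,\infty]$: $\Phi(x(0),\dots,x(\tau))=f(x(0))+r(x(0))+\frac{M\sqrt{\rho_\tau}}{2\sqrt\tau}\sum_{h=1}^\tau(\tau-h+1)\|x(h)-x(h-1)\|^2$, and $z^k:=(x^k,x^{k-1},\dots,x^{k-\tau})$ with $x^i:=x^0$ for $i<0$. *)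

theory Defs
  imports "HOL-Analysis.Analysis"
begin

text \<open>The product space H = H_1 x ... x H_m of finite-dimensional Euclidean
spaces is represented (up to isometry, after choosing orthonormal bases) as real^'n, whose
coordinates are partitioned into blocks by a map blk :: 'n => 'b, where the finite type 'b
indexes the m blocks.\<close>

definition blocksp :: "('n::finite \<Rightarrow> 'b) \<Rightarrow> 'b \<Rightarrow> (real^'n) set" where
  "blocksp blk j = {v. \<forall>c. blk c \<noteq> j \<longrightarrow> v $ c = 0}"

definition blockproj :: "('n::finite \<Rightarrow> 'b) \<Rightarrow> 'b \<Rightarrow> real^'n \<Rightarrow> real^'n" where
  "blockproj blk j x = (\<chi> c. if blk c = j then x $ c else 0)"

text \<open>x_{-j}, x with its j-th block removed (represented by zeroing that block).\<close>
definition blockdrop :: "('n::finite \<Rightarrow> 'b) \<Rightarrow> 'b \<Rightarrow> real^'n \<Rightarrow> real^'n" where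
  "blockdrop blk j x = (\<chi> c. if blk c = j then 0 else x $ c)"

definition blockupd :: "('n::finite \<Rightarrow> 'b) \<Rightarrow> 'b \<Rightarrow> real^'n \<Rightarrow> real^'n \<Rightarrow> real^'n" where
  "blockupd blk j x y = (\<chi> c. if blk c = j then y $ c else x $ c)"

definition pgrad :: "('n::finite \<Rightarrow> 'b) \<Rightarrow> (real^'n \<Rightarrow> real^'n) \<Rightarrow> 'b \<Rightarrow> real^'n \<Rightarrow> real^'n" where
  "pgrad blk g j x = blockproj blk j (g x)"

definition lsc_on :: "'a::topological_space set \<Rightarrow> ('a \<Rightarrow> ereal) \<Rightarrow> bool" where
  "lsc_on S h \<longleftrightarrow> (\<forall>a. closedin (top_of_set S) {u \<in> S. h u \<le> a})"

definition rsum :: "('n::finite \<Rightarrow> 'b::finite) \<Rightarrow> ('b \<Rightarrow> real^'n \<Rightarrow> ereal) \<Rightarrow> real^'n \<Rightarrow> ereal" where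
  "rsum blk r x = (\<Sum>j\<in>UNIV. r j (blockproj blk j x))"

definition Psi :: "('n::finite \<Rightarrow> 'b::finite) \<Rightarrow> (real^'n \<Rightarrow> real) \<Rightarrow> ('b \<Rightarrow> real^'n \<Rightarrow> ereal)
    \<Rightarrow> real^'n \<Rightarrow> ereal" where
  "Psi blk f r x = ereal (f x) + rsum blk r x"

text \<open>x^{k-d_k}: block j taken from x^{k-d_{k,j}}; natural-number subtraction truncates at 0,
which implements the convention x^i = x^0 for i <= 0.\<close>
definition delayed :: "('n::finite \<Rightarrow> 'b) \<Rightarrow> (nat \<Rightarrow> real^'n) \<Rightarrow> (nat \<Rightarrow> 'b \<Rightarrow> nat) \<Rightarrow> nat \<Rightarrow> real^'n" where
  "delayed blk x d k = (\<chi> c. x (k - d k (blk c)) $ c)"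

text \<open>rho_tau = sup_{j,k} |{h : k - tau <= h <= k, j_h = j}| (h ranging over iteration indices >= 0).\<close>
definition rho_tau :: "nat \<Rightarrow> (nat \<Rightarrow> 'b) \<Rightarrow> nat" where
  "rho_tau tau jk = (SUP k. SUP j. card {h \<in> {k - tau..k}. jk h = j})"

definition gam :: "('n::finite \<Rightarrow> 'b) \<Rightarrow> ('b \<Rightarrow> real^'n \<Rightarrow> real) \<Rightarrow> real \<Rightarrow> real \<Rightarrow> nat \<Rightarrow> (nat \<Rightarrow> 'b)
    \<Rightarrow> real \<Rightarrow> (nat \<Rightarrow> real^'n) \<Rightarrow> (nat \<Rightarrow> 'b \<Rightarrow> nat) \<Rightarrow> nat \<Rightarrow> 'b \<Rightarrow> real" where
  "gam blk L c M tau jk lam_r x d k j =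
     min (c * inverse (L j (blockdrop blk j (delayed blk x d k)) + 2 * M * sqrt (real (rho_tau tau jk) * real tau))) lam_r"

text \<open>Lyapunov function Phi(x(0),...,x(tau)); the tuple is given as a function h \<mapsto> x(h), h = 0..tau.\<close>
definition Phi :: "('n::finite \<Rightarrow> 'b::finite) \<Rightarrow> (real^'n \<Rightarrow> real) \<Rightarrow> ('b \<Rightarrow> real^'n \<Rightarrow> ereal)
    \<Rightarrow> real \<Rightarrow> nat \<Rightarrow> (nat \<Rightarrow> 'b) \<Rightarrow> (nat \<Rightarrow> real^'n) \<Rightarrow> ereal" where
  "Phi blk f r M tau jk z =
     ereal (f (z 0)) + rsum blk r (z 0)
     + ereal (M * sqrt (real (rho_tau tau jk)) / (2 * sqrt (real tau))
         * (\<Sum>h = 1..tau. real (tau - h + 1) * (norm (z h - z (h - 1)))\<^sup>2))"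

text \<open>z^k = (x^k, x^{k-1}, ..., x^{k-tau}) with x^i = x^0 for i < 0.\<close>
definition zseq :: "(nat \<Rightarrow> real^'n) \<Rightarrow> nat \<Rightarrow> nat \<Rightarrow> real^'n" where
  "zseq x k = (\<lambda>h. x (k - h))"

end

theory Submission
  imports Defs
begin

lemma bp_in: "blockproj blk j x \<in> blocksp blk j"
  by (simp add: blockproj_def blocksp_def)

lemma inner_block: "v \<in> blocksp blk j \<Longrightarrow> g \<bullet> v = blockproj blk j g \<bullet> v"
  unfolding inner_vec_def blocksp_def blockproj_def
  by (intro sum.cong) auto

lemma norm_sq_vec: "(norm (v::real^'n))\<^sup>2 = (\<Sum>c\<in>UNIV. (v $ c)\<^sup>2)"
  unfolding power2_norm_eq_inner inner_vec_def by (simp add: power2_eq_square)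

lemma descent:
  fixes f :: "real^'n \<Rightarrow> real" and g :: "real^'n \<Rightarrow> real^'n"
  assumes grad: "\<forall>y. (f has_derivative (\<lambda>h. g y \<bullet> h)) (at y)"
    and lip: "\<And>u v. u \<in> blocksp blk j \<Longrightarrow> v \<in> blocksp blk j \<Longrightarrow>
         norm (pgrad blk g j (blockupd blk j x0 u) - pgrad blk g j (blockupd blk j x0 v))
           \<le> LL * norm (u - v)"
    and D: "D \<in> blocksp blk j" and LL: "LL \<ge> 0"
  shows "f (x0 + D) \<le> f x0 + g x0 \<bullet> D + LL / 2 * (norm D)\<^sup>2"
proof -
  define \<phi> where "\<phi> t = f (x0 + t *\<^sub>R D) - t * (g x0 \<bullet> D) - LL / 2 * t\<^sup>2 * (norm D)\<^sup>2" for t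
  have upd: "x0 + t *\<^sub>R D = blockupd blk j x0 (blockproj blk j x0 + t *\<^sub>R D)" for t
    using D unfolding blockupd_def blockproj_def blocksp_def by (auto simp: vec_eq_iff)
  have upd0: "x0 = blockupd blk j x0 (blockproj blk j x0)"
    unfolding blockupd_def blockproj_def by (auto simp: vec_eq_iff)
  have Din: "blockproj blk j x0 + t *\<^sub>R D \<in> blocksp blk j" for t
    using D unfolding blockproj_def blocksp_def by auto
  have "\<phi> 1 \<le> \<phi> 0"
  proof (rule DERIV_nonpos_imp_nonincreasing[of 0 1 \<phi>])
    fix t :: real assume t: "0 \<le> t" "t \<le> 1"
    have d1: "((\<lambda>t. f (x0 + t *\<^sub>R D)) has_derivative (\<lambda>h. g (x0 + t *\<^sub>R D) \<bullet> (h *\<^sub>R D))) (at t)"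
      by (rule has_derivative_compose[where g=f, OF _ grad[rule_format]])
         (auto intro!: derivative_eq_intros)
    have d2: "((\<lambda>t. f (x0 + t *\<^sub>R D)) has_real_derivative (g (x0 + t *\<^sub>R D) \<bullet> D)) (at t)"
      unfolding has_field_derivative_def
      by (rule has_derivative_eq_rhs[OF d1]) (auto simp: fun_eq_iff)
    have "(\<phi> has_real_derivative (g (x0 + t *\<^sub>R D) \<bullet> D - g x0 \<bullet> D - LL * t * (norm D)\<^sup>2)) (at t)"
    proof -
      have d3: "((\<lambda>t. t * (g x0 \<bullet> D)) has_real_derivative (g x0 \<bullet> D)) (at t)"
        by (auto intro!: derivative_eq_intros)
      have d4: "((\<lambda>t. LL / 2 * t\<^sup>2 * (norm D)\<^sup>2) has_real_derivative LL * t * (norm D)\<^sup>2) (at t)"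
        by (auto intro!: derivative_eq_intros simp: power2_eq_square algebra_simps)
      show ?thesis using DERIV_diff[OF DERIV_diff[OF d2 d3] d4] unfolding \<phi>_def by simp
    qed
    moreover have "g (x0 + t *\<^sub>R D) \<bullet> D - g x0 \<bullet> D - LL * t * (norm D)\<^sup>2 \<le> 0"
    proof -
      have "g (x0 + t *\<^sub>R D) \<bullet> D - g x0 \<bullet> D
          = (pgrad blk g j (x0 + t *\<^sub>R D) - pgrad blk g j x0) \<bullet> D"
        using inner_block[OF D] by (simp add: pgrad_def inner_diff_left)
      also have "\<dots> \<le> norm (pgrad blk g j (x0 + t *\<^sub>R D) - pgrad blk g j x0) * norm D"
        by (rule norm_cauchy_schwarz)
      also have "\<dots> \<le> LL * norm (t *\<^sub>R D) * norm D"
      proof (rule mult_right_mono[OF _ norm_ge_zero])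
        have "norm (pgrad blk g j (blockupd blk j x0 (blockproj blk j x0 + t *\<^sub>R D))
                - pgrad blk g j (blockupd blk j x0 (blockproj blk j x0)))
              \<le> LL * norm (blockproj blk j x0 + t *\<^sub>R D - blockproj blk j x0)"
          by (rule lip[OF Din bp_in])
        then show "norm (pgrad blk g j (x0 + t *\<^sub>R D) - pgrad blk g j x0) \<le> LL * norm (t *\<^sub>R D)"
          by (simp only: upd[symmetric] upd0[symmetric]) simp
      qed
      also have "\<dots> = LL * t * (norm D)\<^sup>2" using t by (simp add: power2_eq_square)
      finally show ?thesis by simp
    qed
    ultimately show "\<exists>y. (\<phi> has_real_derivative y) (at t) \<and> y \<le> 0" by blast
  qed simp
  then show ?thesis unfolding \<phi>_def by simp
qed



lemma tele: "x k - x (k - dd) = (\<Sum>h\<in>{1..dd}. x (k - (h - 1)) - x (k - h))"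
  for x :: "nat \<Rightarrow> real^'n"
proof (induction dd)
  case 0 then show ?case by simp
next
  case (Suc dd)
  have "(\<Sum>h\<in>{1..Suc dd}. x (k - (h - 1)) - x (k - h))
      = (\<Sum>h\<in>{1..dd}. x (k - (h - 1)) - x (k - h)) + (x (k - dd) - x (k - Suc dd))"
    by (simp add: sum.atLeast1_atMost_eq)
  also have "\<dots> = x k - x (k - Suc dd)" by (simp only: Suc.IH[symmetric]) simp
  finally show ?case by simp
qed

lemma delay_bound:
  fixes x :: "nat \<Rightarrow> real^'n" and blk :: "'n \<Rightarrow> 'b"
  assumes step_other: "\<forall>k i. blk i \<noteq> jk k \<longrightarrow> x (Suc k) $ i = x k $ i"
    and dle: "\<forall>i. dd i \<le> tau"
    and crd: "\<forall>i. real (card {h \<in> {k - tau..k}. jk h = i}) \<le> rho"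
  shows "(norm (x k - (\<chi> c. x (k - dd (blk c)) $ c)))\<^sup>2
         \<le> rho * (\<Sum>h=1..tau. (norm (x (k - (h - 1)) - x (k - h)))\<^sup>2)"
proof -
  define w where "w h = x (k - (h - 1)) - x (k - h)" for h
  have rho0: "rho \<ge> 0" using crd[rule_format, of undefined] by (meson order_trans of_nat_0_le_iff)
  have coord: "((x k - (\<chi> c. x (k - dd (blk c)) $ c)) $ c)\<^sup>2 \<le> rho * (\<Sum>h=1..tau. (w h $ c)\<^sup>2)" for c
  proof -
    define A where "A = {h\<in>{1..dd (blk c)}. h \<le> k \<and> jk (k - h) = blk c}"
    have c1: "(x k - (\<chi> c. x (k - dd (blk c)) $ c)) $ c = (\<Sum>h\<in>{1..dd (blk c)}. w h $ c)"
    proof -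
      have t: "x k - x (k - dd (blk c)) = (\<Sum>h\<in>{1..dd (blk c)}. w h)" unfolding w_def by (rule tele)
      have "(x k - (\<chi> c. x (k - dd (blk c)) $ c)) $ c = (x k - x (k - dd (blk c))) $ c" by simp
      also have "\<dots> = (\<Sum>h\<in>{1..dd (blk c)}. w h) $ c" by (simp only: t)
      also have "\<dots> = (\<Sum>h\<in>{1..dd (blk c)}. w h $ c)" by (rule sum_component)
      finally show ?thesis .
    qed
    have c2: "(\<Sum>h\<in>{1..dd (blk c)}. w h $ c) = (\<Sum>h\<in>A. w h $ c)"
    proof (rule sum.mono_neutral_right)
      show "\<forall>h\<in>{1..dd (blk c)} - A. w h $ c = 0"
      proof
        fix h assume h: "h \<in> {1..dd (blk c)} - A"
        show "w h $ c = 0"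
        proof (cases "h \<le> k")
          case True
          then have "k - (h - 1) = Suc (k - h)" "jk (k - h) \<noteq> blk c" using h by (auto simp: A_def)
          then show ?thesis using step_other unfolding w_def by auto
        next
          case False
          then have "k - (h - 1) = 0" "k - h = 0" by auto
          then show ?thesis unfolding w_def by simp
        qed
      qed
    qed (auto simp: A_def)
    have c3: "real (card A) \<le> rho"
    proof -
      have "card A \<le> card {h \<in> {k - tau..k}. jk h = blk c}"
      proof (rule card_inj_on_le[of "\<lambda>h. k - h"])
        show "inj_on (\<lambda>h. k - h) A" by (auto simp: A_def inj_on_def)
        show "(\<lambda>h. k - h) ` A \<subseteq> {h \<in> {k - tau..k}. jk h = blk c}"
        proof (rule image_subsetI)
          fix h assume h: "h \<in> A"
          then have "h \<le> tau" using dle[rule_format, of "blk c"] by (auto simp: A_def)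
          then show "k - h \<in> {h \<in> {k - tau..k}. jk h = blk c}" using h by (auto simp: A_def)
        qed
      qed simp
      then have "real (card A) \<le> real (card {h \<in> {k - tau..k}. jk h = blk c})" by simp
      then show ?thesis using crd[rule_format, of "blk c"] by linarith
    qed
    have "((x k - (\<chi> c. x (k - dd (blk c)) $ c)) $ c)\<^sup>2 = (\<Sum>h\<in>A. w h $ c)\<^sup>2"
      using c1 c2 by simp
    also have "\<dots> \<le> (\<Sum>h\<in>A. (w h $ c)\<^sup>2) * card A" by (rule sum_squared_le_sum_of_squares)
    also have "\<dots> \<le> (\<Sum>h\<in>A. (w h $ c)\<^sup>2) * rho"
      by (rule mult_left_mono[OF c3]) (simp add: sum_nonneg)
    also have "\<dots> \<le> (\<Sum>h=1..tau. (w h $ c)\<^sup>2) * rho"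
      apply (rule mult_right_mono[OF _ rho0])
      apply (rule sum_mono2)
      using dle[rule_format, of "blk c"] by (auto simp: A_def)
    finally show ?thesis by (simp add: mult.commute)
  qed
  have "(norm (x k - (\<chi> c. x (k - dd (blk c)) $ c)))\<^sup>2
      = (\<Sum>c\<in>UNIV. ((x k - (\<chi> c. x (k - dd (blk c)) $ c)) $ c)\<^sup>2)"
    unfolding power2_norm_eq_inner inner_vec_def by (simp add: power2_eq_square)
  also have "\<dots> \<le> (\<Sum>c\<in>UNIV. rho * (\<Sum>h=1..tau. (w h $ c)\<^sup>2))"
    by (rule sum_mono) (rule coord)
  also have "\<dots> = rho * (\<Sum>h=1..tau. (\<Sum>c\<in>UNIV. (w h $ c)\<^sup>2))"
    by (simp add: sum_distrib_left sum.swap[of _ UNIV])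
  also have "\<dots> = rho * (\<Sum>h=1..tau. (norm (w h))\<^sup>2)"
    unfolding power2_norm_eq_inner inner_vec_def by (simp add: power2_eq_square)
  finally show ?thesis unfolding w_def .
qed

lemma shift_aux: "(\<Sum>h=1..t. a h) + a (Suc t) = a 1 + (\<Sum>h=1..t. a (Suc h))"
  for a :: "nat \<Rightarrow> real"
  by (induction t) (simp_all add: sum.atLeast1_atMost_eq algebra_simps)

lemma shift: "(\<Sum>h=1..t. real (t - h + 1) * a h)
   = real t * a 1 + (\<Sum>h=1..t. real (t - h + 1) * a (Suc h)) - (\<Sum>h=1..t. a (Suc h))"
  for a :: "nat \<Rightarrow> real"
proof (induction t)
  case 0 then show ?case by simp
next
  case (Suc t)
  have e1: "(\<Sum>h=1..Suc t. real (Suc t - h + 1) * b h)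
      = (\<Sum>h=1..t. real (t - h + 1) * b h) + (\<Sum>h=1..t. b h) + b (Suc t)" for b :: "nat \<Rightarrow> real"
  proof -
    have "(\<Sum>h=1..t. real (Suc t - h + 1) * b h) = (\<Sum>h=1..t. real (t - h + 1) * b h + b h)"
      by (rule sum.cong) (auto simp: Suc_diff_le algebra_simps)
    then show ?thesis by (simp add: sum.distrib)
  qed
  show ?case using Suc shift_aux[where a=a and t=t] by (simp only: e1) (simp add: algebra_simps)
qed


lemma key_real:
  fixes fx1 fx0 R1 R0 pD p0D LL gm D a E S S' M rho tau :: real
  assumes h1: "fx1 \<le> fx0 + p0D + LL / 2 * D"
    and h2: "R1 + (pD + 1 / (2 * gm) * D) \<le> R0"
    and h3: "p0D - pD \<le> M * a * sqrt D"
    and h4: "a\<^sup>2 \<le> rho * E"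
    and h5: "S' = S + tau * D - E"
    and r1: "rho \<ge> 1" and t1: "tau \<ge> 1" and M0: "M > 0" and D0: "D \<ge> 0" and a0: "a \<ge> 0"
  shows "fx1 + R1 + M * sqrt rho / (2 * sqrt tau) * S'
          + 1 / 2 * (1 / gm - LL - 2 * M * sqrt (rho * tau)) * D
        \<le> fx0 + R0 + M * sqrt rho / (2 * sqrt tau) * S"
proof -
  define q where "q = sqrt (rho * tau)"
  define c1 where "c1 = sqrt rho / (2 * sqrt tau)"
  have q0: "q > 0" using r1 t1 by (simp add: q_def)
  have sr: "sqrt rho > 0" "sqrt tau > 0" using r1 t1 by auto
  have qq: "q = sqrt rho * sqrt tau" by (simp add: q_def real_sqrt_mult)
  have sD: "sqrt D * sqrt D = D" using D0 by simp
  have srr: "sqrt rho * sqrt rho = rho" using r1 by simp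
  have stt: "sqrt tau * sqrt tau = tau" using t1 by simp
  have amgm: "a * sqrt D \<le> a\<^sup>2 / (2 * q) + q / 2 * D"
  proof -
    have "0 \<le> (a - q * sqrt D)\<^sup>2" by simp
    also have "(a - q * sqrt D)\<^sup>2 = a\<^sup>2 - 2 * q * (a * sqrt D) + q\<^sup>2 * (sqrt D * sqrt D)"
      by (simp add: power2_eq_square algebra_simps)
    finally have "2 * q * (a * sqrt D) \<le> a\<^sup>2 + q\<^sup>2 * D" unfolding sD by linarith
    then have "a * sqrt D \<le> (a\<^sup>2 + q\<^sup>2 * D) / (2 * q)" using q0 by (simp add: pos_le_divide_eq mult.commute)
    also have "(a\<^sup>2 + q\<^sup>2 * D) / (2 * q) = a\<^sup>2 / (2 * q) + q / 2 * D"
      using q0 by (simp add: add_divide_distrib power2_eq_square)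
    finally show ?thesis .
  qed
  have e1: "a\<^sup>2 / (2 * q) \<le> rho * E / (2 * q)"
    using h4 q0 by (simp add: divide_right_mono)
  have e2: "rho * E / (2 * q) = c1 * E"
    unfolding c1_def qq using sr srr by (simp add: field_simps)
  have e3: "c1 * tau = q / 2"
    unfolding c1_def qq using sr stt by (simp add: field_simps)
  have cross0: "a * sqrt D \<le> c1 * E + q / 2 * D" using amgm e1 e2 by linarith
  have cross: "p0D - pD \<le> M * (c1 * E) + M * (q / 2 * D)"
  proof -
    have "p0D - pD \<le> M * (a * sqrt D)" using h3 by (simp add: mult.assoc)
    also have "\<dots> \<le> M * (c1 * E + q / 2 * D)"
      using cross0 M0 by (intro mult_left_mono) auto
    finally show ?thesis by (simp add: distrib_left)
  qed
  have c0: "M * sqrt rho / (2 * sqrt tau) = M * c1" by (simp add: c1_def)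
  have eqS: "M * c1 * S' = M * c1 * S + M * (c1 * tau) * D - M * (c1 * E)"
    unfolding h5 by (simp add: algebra_simps)
  have eqS2: "M * (c1 * tau) * D = M * (q / 2 * D)" unfolding e3 by simp
  have ex: "1 / 2 * (1 / gm - LL - 2 * M * q) * D = 1 / (2 * gm) * D - LL / 2 * D - 2 * (M * (q / 2 * D))"
    by (simp add: algebra_simps)
  show ?thesis unfolding c0 q_def[symmetric] eqS ex eqS2 using h1 h2 cross by linarith
qed


lemma sum_nMinf: "(\<And>i. i \<in> A \<Longrightarrow> f i \<noteq> -\<infinity>) \<Longrightarrow> sum f A \<noteq> (-\<infinity>::ereal)"
  by (induction A rule: infinite_finite_induct) auto

lemma ereal_comb:
  fixes R0 R1 Q :: ereal
  assumes "R1 + ereal u \<le> R0" "R1 \<noteq> -\<infinity>" "Q \<noteq> -\<infinity>"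
    and "\<And>r1 r0. r1 + u \<le> r0 \<Longrightarrow> A1 + r1 + C1 + W \<le> A0 + r0 + C0"
  shows "ereal A1 + (R1 + Q) + ereal C1 + ereal W \<le> ereal A0 + (R0 + Q) + ereal C0"
  using assms by (cases R0; cases Q; cases R1) auto


theorem mainTheorem4:
  fixes blk :: "'n::finite \<Rightarrow> 'b::finite"
    and f :: "real^'n \<Rightarrow> real" and g :: "real^'n \<Rightarrow> real^'n"
    and r :: "'b \<Rightarrow> real^'n \<Rightarrow> ereal"
    and L :: "'b \<Rightarrow> real^'n \<Rightarrow> real"
    and lam_r c M :: real and tau :: nat
    and d :: "nat \<Rightarrow> 'b \<Rightarrow> nat" and jk :: "nat \<Rightarrow> 'b"
    and x :: "nat \<Rightarrow> real^'n"
  assumes grad: "\<forall>y. (f has_derivative (\<lambda>h. g y \<bullet> h)) (at y)"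
    and C1: "continuous_on UNIV g"
    and r_proper: "\<forall>j. \<forall>u\<in>blocksp blk j. r j u \<noteq> -\<infinity>"
                  "\<forall>j. \<exists>u\<in>blocksp blk j. r j u \<noteq> \<infinity>"
    and r_lsc: "\<forall>j. lsc_on (blocksp blk j) (r j)"
    and Psi_bdd: "\<exists>B::real. \<forall>y. ereal B \<le> Psi blk f r y"
    and lam_r_pos: "lam_r > 0"
    and prox_bdd: "\<forall>y lam. 0 < lam \<and> lam \<le> lam_r \<longrightarrow>
         (\<exists>v. \<forall>w. rsum blk r v + ereal (1 / (2 * lam) * (norm (y - v))\<^sup>2)
                   \<le> rsum blk r w + ereal (1 / (2 * lam) * (norm (y - w))\<^sup>2))"
    and L_pos: "\<forall>j y. 0 < L j (blockdrop blk j y)"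
    and L_lip: "\<forall>j y u v. u \<in> blocksp blk j \<longrightarrow> v \<in> blocksp blk j \<longrightarrow>
         norm (pgrad blk g j (blockupd blk j y u) - pgrad blk g j (blockupd blk j y v))
           \<le> L j (blockdrop blk j y) * norm (u - v)"
    and tau_ge: "tau \<ge> 1"
    and delays: "\<forall>k j. d k j \<le> tau"
    and c_bds: "0 < c" "c < 1"
    and M_pos: "M > 0"
    and step_other: "\<forall>k i. blk i \<noteq> jk k \<longrightarrow> x (Suc k) $ i = x k $ i"
    and step_argmin: "\<forall>k. \<forall>u\<in>blocksp blk (jk k).
         r (jk k) (blockproj blk (jk k) (x (Suc k)))
           + ereal (pgrad blk g (jk k) (delayed blk x d k)
                      \<bullet> (blockproj blk (jk k) (x (Suc k)) - blockproj blk (jk k) (x k))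
                    + 1 / (2 * gam blk L c M tau jk lam_r x d k (jk k))
                      * (norm (blockproj blk (jk k) (x (Suc k)) - blockproj blk (jk k) (x k)))\<^sup>2)
         \<le> r (jk k) u
           + ereal (pgrad blk g (jk k) (delayed blk x d k) \<bullet> (u - blockproj blk (jk k) (x k))
                    + 1 / (2 * gam blk L c M tau jk lam_r x d k (jk k))
                      * (norm (u - blockproj blk (jk k) (x k)))\<^sup>2)"
    and A3: "\<forall>k. norm (pgrad blk g (jk k) (x k) - pgrad blk g (jk k) (delayed blk x d k))
                  \<le> M * norm (x k - delayed blk x d k)"
  shows "(\<forall>k. Phi blk f r M tau jk (zseq x (Suc k))
              + ereal (1 / 2 * (1 / gam blk L c M tau jk lam_r x d k (jk k)
                                - L (jk k) (blockdrop blk (jk k) (x k))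
                                - 2 * M * sqrt (real (rho_tau tau jk) * real tau))
                       * (norm (blockproj blk (jk k) (x (Suc k)) - blockproj blk (jk k) (x k)))\<^sup>2)
            \<le> Phi blk f r M tau jk (zseq x k))
       \<and> (\<forall>k. Psi blk f r (x k) \<le> Phi blk f r M tau jk (zseq x k))
       \<and> Phi blk f r M tau jk (zseq x 0) = Psi blk f r (x 0)"
proof -
  have cardle: "card {h \<in> {k - tau..k}. jk h = i} \<le> tau + 1" for k i
  proof -
    have "card {h \<in> {k - tau..k}. jk h = i} \<le> card {k - tau..k}" by (rule card_mono) auto
    also have "\<dots> \<le> tau + 1" by simp
    finally show ?thesis .
  qed
  have rho_ge: "card {h \<in> {k - tau..k}. jk h = i} \<le> rho_tau tau jk" for k i
  proof -
    have b1: "bdd_above (range (\<lambda>j. card {h \<in> {k - tau..k}. jk h = j}))" for k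
    proof (rule bdd_aboveI[where M="tau + 1"])
      fix y assume "y \<in> range (\<lambda>j. card {h \<in> {k - tau..k}. jk h = j})"
      then obtain i' where "y = card {h \<in> {k - tau..k}. jk h = i'}" by blast
      then show "y \<le> tau + 1" using cardle[of k i'] by (simp only:)
    qed
    have b2: "bdd_above (range (\<lambda>k. SUP j. card {h \<in> {k - tau..k}. jk h = j}))"
    proof (rule bdd_aboveI[where M="tau + 1"])
      fix y assume "y \<in> range (\<lambda>k. SUP j. card {h \<in> {k - tau..k}. jk h = j})"
      then obtain k' where y: "y = (SUP j. card {h \<in> {k' - tau..k'}. jk h = j})" by blast
      have "(SUP j. card {h \<in> {k' - tau..k'}. jk h = j}) \<le> tau + 1"
        by (rule cSUP_least) (simp, rule cardle)
      with y show "y \<le> tau + 1" by (simp only:)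
    qed
    have "card {h \<in> {k - tau..k}. jk h = i} \<le> (SUP j. card {h \<in> {k - tau..k}. jk h = j})"
      by (rule cSUP_upper[OF _ b1]) simp
    also have "\<dots> \<le> rho_tau tau jk" unfolding rho_tau_def
      by (rule cSUP_upper[OF _ b2]) simp
    finally show ?thesis .
  qed
  have rho1: "rho_tau tau jk \<ge> 1"
  proof -
    have "{h \<in> {0 - tau..0}. jk h = jk 0} = {0}" by auto
    then have "card {h \<in> {0 - tau..0}. jk h = jk 0} = 1" by simp
    then show ?thesis using rho_ge[of 0 "jk 0"] by simp
  qed
  define c0 where "c0 = M * sqrt (real (rho_tau tau jk)) / (2 * sqrt (real tau))"
  define S where "S k = (\<Sum>h = 1..tau. real (tau - h + 1) * (norm (zseq x k h - zseq x k (h - 1)))\<^sup>2)" for k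
  have Phi_eq: "Phi blk f r M tau jk (zseq x k) = ereal (f (x k)) + rsum blk r (x k) + ereal (c0 * S k)" for k
    by (simp add: Phi_def c0_def S_def zseq_def)
  have S0: "S k \<ge> 0" for k unfolding S_def by (intro sum_nonneg) simp
  have c00: "c0 \<ge> 0" using M_pos by (simp add: c0_def)
  have part1: "\<forall>k. Phi blk f r M tau jk (zseq x (Suc k))
              + ereal (1 / 2 * (1 / gam blk L c M tau jk lam_r x d k (jk k)
                                - L (jk k) (blockdrop blk (jk k) (x k))
                                - 2 * M * sqrt (real (rho_tau tau jk) * real tau))
                       * (norm (blockproj blk (jk k) (x (Suc k)) - blockproj blk (jk k) (x k)))\<^sup>2)
            \<le> Phi blk f r M tau jk (zseq x k)"
  proof
    fix k
    define j where "j = jk k"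
    define x0 where "x0 = x k"
    define x1 where "x1 = x (Suc k)"
    define D where "D = x1 - x0"
    define gm where "gm = gam blk L c M tau jk lam_r x d k j"
    define LL where "LL = L j (blockdrop blk j x0)"
    define dl where "dl = delayed blk x d k"
    define p where "p = pgrad blk g j dl"
    define p0 where "p0 = pgrad blk g j x0"
    define R0 where "R0 = r j (blockproj blk j x0)"
    define R1 where "R1 = r j (blockproj blk j x1)"
    define Q where "Q = (\<Sum>i\<in>UNIV - {j}. r i (blockproj blk i x0))"
    define E where "E = (\<Sum>h=1..tau. (norm (x (k - (h - 1)) - x (k - h)))\<^sup>2)"
    have so: "blk i \<noteq> j \<Longrightarrow> x1 $ i = x0 $ i" for i using step_other by (simp add: j_def x0_def x1_def)
    have Dblk: "D \<in> blocksp blk j" using so by (auto simp: blocksp_def D_def)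
    have bpD: "blockproj blk j x1 - blockproj blk j x0 = D"
      using so by (auto simp: vec_eq_iff blockproj_def D_def)
    have bpo: "i \<noteq> j \<Longrightarrow> blockproj blk i x1 = blockproj blk i x0" for i
      using so by (auto simp: vec_eq_iff blockproj_def)
    have LL0: "LL \<ge> 0" using L_pos by (simp add: LL_def less_imp_le)
    have lip: "\<And>u v. u \<in> blocksp blk j \<Longrightarrow> v \<in> blocksp blk j \<Longrightarrow>
         norm (pgrad blk g j (blockupd blk j x0 u) - pgrad blk g j (blockupd blk j x0 v))
           \<le> LL * norm (u - v)" using L_lip by (simp add: LL_def)
    have x0D: "x0 + D = x1" by (simp add: D_def)
    have desc: "f x1 \<le> f x0 + p0 \<bullet> D + LL / 2 * (norm D)\<^sup>2"
      using descent[OF grad lip Dblk LL0] inner_block[OF Dblk, of "g x0"]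
      by (simp add: x0D p0_def pgrad_def)
    have am_all: "\<forall>u\<in>blocksp blk j. r j (blockproj blk j x1)
           + ereal (p \<bullet> (blockproj blk j x1 - blockproj blk j x0)
                    + 1 / (2 * gm) * (norm (blockproj blk j x1 - blockproj blk j x0))\<^sup>2)
         \<le> r j u + ereal (p \<bullet> (u - blockproj blk j x0) + 1 / (2 * gm) * (norm (u - blockproj blk j x0))\<^sup>2)"
      unfolding j_def x0_def x1_def p_def dl_def gm_def by (rule spec[OF step_argmin])
    have am0: "R1 + ereal (p \<bullet> D + 1 / (2 * gm) * (norm D)\<^sup>2) \<le> R0"
      using bspec[OF am_all bp_in[of blk j x0]] unfolding bpD R0_def R1_def by simp
    have cross: "p0 \<bullet> D - p \<bullet> D \<le> M * norm (x0 - dl) * sqrt ((norm D)\<^sup>2)"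
    proof -
      have "p0 \<bullet> D - p \<bullet> D = (p0 - p) \<bullet> D" by (simp add: inner_diff_left)
      also have "\<dots> \<le> norm (p0 - p) * norm D" by (rule norm_cauchy_schwarz)
      also have "\<dots> \<le> M * norm (x0 - dl) * norm D"
        apply (rule mult_right_mono[OF _ norm_ge_zero])
        unfolding p0_def p_def j_def x0_def dl_def by (rule spec[OF A3])
      finally show ?thesis by simp
    qed
    have delay: "(norm (x0 - dl))\<^sup>2 \<le> real (rho_tau tau jk) * E"
    proof -
      have "dl = (\<chi> c. x (k - d k (blk c)) $ c)" by (simp add: dl_def delayed_def)
      moreover have "(norm (x k - (\<chi> c. x (k - d k (blk c)) $ c)))\<^sup>2
         \<le> real (rho_tau tau jk) * (\<Sum>h=1..tau. (norm (x (k - (h - 1)) - x (k - h)))\<^sup>2)"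
        by (rule delay_bound[OF step_other]) (use delays rho_ge in auto)
      ultimately show ?thesis by (simp add: x0_def E_def)
    qed
    have sk: "1 \<le> h \<Longrightarrow> k - (h - 1) = Suc k - h" for h by arith
    have shiftk: "S (Suc k) = S k + real tau * (norm D)\<^sup>2 - E"
    proof -
      define a where "a h = (norm (x (Suc k - h) - x (Suc k - (h - 1))))\<^sup>2" for h
      have "S (Suc k) = (\<Sum>h=1..tau. real (tau - h + 1) * a h)"
        by (simp add: S_def zseq_def a_def)
      also have "\<dots> = real tau * a 1 + (\<Sum>h=1..tau. real (tau - h + 1) * a (Suc h)) - (\<Sum>h=1..tau. a (Suc h))"
        by (rule shift)
      also have "a 1 = (norm D)\<^sup>2" by (simp add: a_def D_def x0_def x1_def norm_minus_commute)
      also have "(\<Sum>h=1..tau. real (tau - h + 1) * a (Suc h)) = S k"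
        unfolding S_def zseq_def a_def by (rule sum.cong) (auto simp: sk)
      also have "(\<Sum>h=1..tau. a (Suc h)) = E"
        unfolding E_def a_def by (rule sum.cong) (auto simp: sk norm_minus_commute)
      finally show ?thesis by simp
    qed
    have rs0: "rsum blk r x0 = R0 + Q"
      unfolding rsum_def R0_def Q_def by (rule sum.remove) auto
    have rs1: "rsum blk r x1 = R1 + Q"
    proof -
      have "rsum blk r x1 = R1 + (\<Sum>i\<in>UNIV - {j}. r i (blockproj blk i x1))"
        unfolding rsum_def R1_def by (rule sum.remove) auto
      also have "(\<Sum>i\<in>UNIV - {j}. r i (blockproj blk i x1)) = Q"
        unfolding Q_def by (rule sum.cong) (auto simp: bpo)
      finally show ?thesis .
    qed
    have Qnm: "Q \<noteq> -\<infinity>" unfolding Q_def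
      by (rule sum_nMinf) (rule r_proper(1)[rule_format, OF bp_in])
    have R1nm: "R1 \<noteq> -\<infinity>" unfolding R1_def by (rule r_proper(1)[rule_format, OF bp_in])
    have rho1r: "real (rho_tau tau jk) \<ge> 1" using rho1 by simp
    have tau1r: "real tau \<ge> 1" using tau_ge by simp
    have fin: "ereal (f x1) + (R1 + Q) + ereal (c0 * S (Suc k))
       + ereal (1 / 2 * (1 / gm - LL - 2 * M * sqrt (real (rho_tau tau jk) * real tau)) * (norm D)\<^sup>2)
       \<le> ereal (f x0) + (R0 + Q) + ereal (c0 * S k)"
    proof (rule ereal_comb[OF am0 R1nm Qnm])
      fix r1 r0 assume h2: "r1 + (p \<bullet> D + 1 / (2 * gm) * (norm D)\<^sup>2) \<le> r0"
      show "f x1 + r1 + c0 * S (Suc k)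
         + 1 / 2 * (1 / gm - LL - 2 * M * sqrt (real (rho_tau tau jk) * real tau)) * (norm D)\<^sup>2
         \<le> f x0 + r0 + c0 * S k"
        unfolding c0_def
        by (rule key_real[OF desc h2 cross delay shiftk rho1r tau1r M_pos]) auto
    qed
    show "Phi blk f r M tau jk (zseq x (Suc k))
              + ereal (1 / 2 * (1 / gam blk L c M tau jk lam_r x d k (jk k)
                                - L (jk k) (blockdrop blk (jk k) (x k))
                                - 2 * M * sqrt (real (rho_tau tau jk) * real tau))
                       * (norm (blockproj blk (jk k) (x (Suc k)) - blockproj blk (jk k) (x k)))\<^sup>2)
            \<le> Phi blk f r M tau jk (zseq x k)"
      unfolding Phi_eq j_def[symmetric] x0_def[symmetric] x1_def[symmetric] gm_def[symmetric]
        LL_def[symmetric] bpD rs0 rs1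
      using fin .
  qed
  have part2: "\<forall>k. Psi blk f r (x k) \<le> Phi blk f r M tau jk (zseq x k)"
  proof
    fix k
    have "Psi blk f r (x k) \<le> ereal (f (x k)) + rsum blk r (x k) + ereal (c0 * S k)"
      unfolding Psi_def by (rule add_increasing2[OF _ order_refl]) (use S0 c00 in simp)
    then show "Psi blk f r (x k) \<le> Phi blk f r M tau jk (zseq x k)" by (simp add: Phi_eq)
  qed
  have part3: "Phi blk f r M tau jk (zseq x 0) = Psi blk f r (x 0)"
  proof -
    have "S 0 = 0" unfolding S_def zseq_def by simp
    then show ?thesis by (simp add: Phi_eq Psi_def)
  qed
  show ?thesis by (rule conjI[OF part1 conjI[OF part2 part3]])
qed

end
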